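(* Let $*$ be a rank-one preserving product on $M_{n\times m}(\mathbb{C})$, and write its identity element as $e f^*$ with $e\in\mathbb{C}^n$, $f\in\mathbb{C}^m$. Then for all $v,w\in\mathbb{C}^n$ there exists $u\in\mathbb{C}^n$ such that $v f^* * w f^* = u f^*$. Similarly, for all $v,w\in\mathbb{C}^m$ there exists $u\in\mathbb{C}^m$ such that $e v^* * e w^* = e u^*$.
   Context: A rank-one preserving product (ropp) on $M_{n\times m}(\mathbb{C})$ is an associative bilinear product $*$ on $M_{n\times m}(\mathbb{C})$ which has an identity element of rank one and such that the $*$-product of any two rank-one matrices has rank at most one. Here $u^*$ denotes the conjugate transpose of a column vector $u$. *)

theory Defs
  imports "HOL-Analysis.Analysis"
begin

text \<open>n x m complex matrices are rendered as complex^'m^'n (row index 'n, column index 'm).\<close>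

definition cmat_smult :: "complex \<Rightarrow> complex^'m^'n \<Rightarrow> complex^'m^'n" where
  "cmat_smult c A = (\<chi> i j. c * A $ i $ j)"

definition outer :: "complex^'n \<Rightarrow> complex^'m \<Rightarrow> complex^'m^'n" where
  "outer u v = (\<chi> i j. u $ i * cnj (v $ j))"

definition is_identity :: "(complex^'m^'n \<Rightarrow> complex^'m^'n \<Rightarrow> complex^'m^'n) \<Rightarrow> complex^'m^'n \<Rightarrow> bool" where
  "is_identity p E \<longleftrightarrow> (\<forall>X. p E X = X \<and> p X E = X)"

definition ropp :: "(complex^'m^'n \<Rightarrow> complex^'m^'n \<Rightarrow> complex^'m^'n) \<Rightarrow> bool" where
  "ropp p \<longleftrightarrow>
     (\<forall>A B C. p (A + B) C = p A C + p B C) \<and>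
     (\<forall>A B C. p A (B + C) = p A B + p A C) \<and>
     (\<forall>c A B. p (cmat_smult c A) B = cmat_smult c (p A B)) \<and>
     (\<forall>c A B. p A (cmat_smult c B) = cmat_smult c (p A B)) \<and>
     (\<forall>A B C. p (p A B) C = p A (p B C)) \<and>
     (\<exists>E. is_identity p E \<and> rank E = 1) \<and>
     (\<forall>A B. rank A = 1 \<longrightarrow> rank B = 1 \<longrightarrow> rank (p A B) \<le> 1)"

end

theory Submission
  imports Defs
begin

lemma rank_le1_minor:
  fixes A :: "'a::field^'m^'n"
  assumes "rank A \<le> 1"
  shows "A$i$j * A$l$k = A$i$k * A$l$j"
proof -
  obtain B where B: "B \<subseteq> rows A" "vec.independent B" "rows A \<subseteq> vec.span B" "card B = vec.dim (rows A)"
    by (rule vec.basis_exists)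
  have c1: "card B \<le> 1" using assms B(4) by (simp add: row_rank_def_gen)
  have fin: "finite B" using B(2) vec.finiteI_independent by blast
  obtain z where z: "B \<subseteq> {z}"
  proof (cases "B = {}")
    case True then show ?thesis using that by blast
  next
    case False then obtain z where "z \<in> B" by blast
    then have "B \<subseteq> {z}" using c1 fin card_le_Suc0_iff_eq by fastforce
    then show ?thesis using that by blast
  qed
  have sp: "rows A \<subseteq> vec.span {z}" using B(3) vec.span_mono[OF z] by blast
  have "row i A \<in> rows A" "row l A \<in> rows A" by (auto simp: rows_def)
  then obtain c d where c: "row i A = c *s z" and d: "row l A = d *s z"
    using sp vec.span_singleton by blast
  have "A$i$j = c * z$j" "A$i$k = c * z$k" "A$l$j = d * z$j" "A$l$k = d * z$k"
    using c d by (metis row_def vec_lambda_beta vector_smult_component)+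
  then show ?thesis by (simp add: algebra_simps)
qed

lemma rank_outer:
  fixes x :: "complex^'n" and f :: "complex^'m"
  assumes "x \<noteq> 0" "f \<noteq> 0"
  shows "rank (outer x f) = 1"
proof -
  let ?g = "(\<chi> j. cnj (f$j)) :: complex^'m"
  have r: "row i (outer x f) = (x$i) *s ?g" for i
    by (simp add: row_def outer_def vec_eq_iff)
  have "rows (outer x f) \<subseteq> vec.span {?g}"
    using r by (auto simp: rows_def vec.span_singleton)
  then have le: "vec.dim (rows (outer x f)) \<le> 1"
    using vec.dim_le_card[of _ "{?g}"] by simp
  obtain i where i: "x$i \<noteq> 0" using assms(1) by (metis vec_eq_iff zero_index)
  obtain j where j: "f$j \<noteq> 0" using assms(2) by (metis vec_eq_iff zero_index)
  have "row i (outer x f) \<in> rows (outer x f)" by (auto simp: rows_def)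
  moreover have "row i (outer x f) \<noteq> 0"
    using i j by (simp add: row_def outer_def vec_eq_iff) blast
  ultimately have "vec.dim (rows (outer x f)) \<noteq> 0" by (auto simp: vec.dim_eq_0)
  with le have "vec.dim (rows (outer x f)) = 1" by linarith
  then show ?thesis by (simp add: row_rank_def_gen)
qed

lemma rank_zero: "rank (0::complex^'m^'n) = 0"
  unfolding row_rank_def_gen vec.dim_eq_0 by (auto simp: rows_def row_def vec_eq_iff)


lemma core:
  fixes C :: "'a \<Rightarrow> 'b \<Rightarrow> complex" and e vv w :: "'a \<Rightarrow> complex" and g :: "'b \<Rightarrow> complex"
  assumes gk: "g k \<noteq> 0" and em: "e m \<noteq> 0"
  and minor: "\<And>s t i l j. (C i j + g j*(t* vv i + s*w i + s*t*e i)) * (C l k + g k*(t* vv l + s*w l + s*t*e l))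
       = (C i k + g k*(t* vv i + s*w i + s*t*e i)) * (C l j + g j*(t* vv l + s*w l + s*t*e l))"
  and degen: "\<And>\<beta> \<gamma> i j. (\<forall>i. vv i = \<beta> * e i) \<Longrightarrow> (\<forall>i. w i = \<gamma> * e i) \<Longrightarrow> C i j = \<beta>*\<gamma>*e i*g j"
  shows "\<exists>u. \<forall>i j. C i j = u i * g j"
proof -
  have zero: "C i j - C i k * g j / g k = 0" for i j
  proof -
    define a where "a i = C i j - C i k * g j / g k" for i
    have key: "a i * (C l k + g k*(t* vv l + s*w l + s*t*e l)) = (C i k + g k*(t* vv i + s*w i + s*t*e i)) * a l"
      for s t i l
    proof -
      have "a i * (C l k + g k*(t* vv l + s*w l + s*t*e l)) - (C i k + g k*(t* vv i + s*w i + s*t*e i)) * a l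
         = (C i j + g j*(t* vv i + s*w i + s*t*e i)) * (C l k + g k*(t* vv l + s*w l + s*t*e l))
          - (C i k + g k*(t* vv i + s*w i + s*t*e i)) * (C l j + g j*(t* vv l + s*w l + s*t*e l))"
        unfolding a_def using gk by (simp add: field_simps)
      then show ?thesis using minor[of i j t s l] by simp
    qed
    have K00: "a i * C l k = C i k * a l" for i l using key[where i=i and l=l and t=0 and s=0] by simp
    have Kv: "a i * vv l = vv i * a l" for i l
    proof -
      have "a i * (C l k + g k* vv l) = (C i k + g k* vv i) * a l" using key[where i=i and l=l and t=1 and s=0] by simp
      then have "g k * (a i * vv l - vv i * a l) = 0" using K00[of i l] by (simp add: algebra_simps)
      then show ?thesis using gk by simp
    qed
    have Kw: "a i * w l = w i * a l" for i l
    proof -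
      have "a i * (C l k + g k*w l) = (C i k + g k*w i) * a l" using key[where i=i and l=l and t=0 and s=1] by simp
      then have "g k * (a i * w l - w i * a l) = 0" using K00[of i l] by (simp add: algebra_simps)
      then show ?thesis using gk by simp
    qed
    have Ke: "a i * e l = e i * a l" for i l
    proof -
      have "a i * (C l k + g k*(vv l + w l + e l)) = (C i k + g k*(vv i + w i + e i)) * a l" using key[where i=i and l=l and t=1 and s=1] by simp
      moreover have "g k * (a i * e l - e i * a l) = (a i * (C l k + g k*(vv l + w l + e l)) - (C i k + g k*(vv i + w i + e i)) * a l)
          - (a i * C l k - C i k * a l) - g k*(a i * vv l - vv i * a l) - g k*(a i*w l - w i*a l)"
        by (simp add: algebra_simps)
      ultimately have "g k * (a i * e l - e i * a l) = 0" using K00[of i l] Kv[of i l] Kw[of i l] by simp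
      then show ?thesis using gk by simp
    qed
    show ?thesis
    proof (rule ccontr)
      assume "C i j - C i k * g j / g k \<noteq> 0"
      then have ai: "a i \<noteq> 0" by (simp add: a_def)
      have ei: "e i \<noteq> 0" using Ke[of i m] ai em by auto
      have al: "a l = a i * e l / e i" for l using Ke[of i l] ei by (simp add: field_simps)
      have "\<forall>l. vv l = (vv i / e i) * e l"
      proof
        fix l show "vv l = (vv i / e i) * e l" using Kv[of i l] al[of l] ai ei by (simp add: field_simps)
      qed
      moreover have "\<forall>l. w l = (w i / e i) * e l"
      proof
        fix l show "w l = (w i / e i) * e l" using Kw[of i l] al[of l] ai ei by (simp add: field_simps)
      qed
      ultimately have "C i j = (vv i / e i)*(w i / e i)*e i*g j" "C i k = (vv i / e i)*(w i / e i)*e i*g k"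
        using degen by blast+
      then have "a i = 0" unfolding a_def using gk by (simp add: field_simps)
      with ai show False by simp
    qed
  qed
  show ?thesis
  proof (intro exI allI)
    fix i j show "C i j = C i k / g k * g j" using zero[of i j] by (simp add: field_simps)
  qed
qed

lemma cmat_smult_smult: "cmat_smult s (cmat_smult t X) = cmat_smult (s*t) X"
  by (simp add: cmat_smult_def vec_eq_iff mult.assoc)

lemma expand:
  assumes "ropp p"
  shows "p (A + cmat_smult s E) (B + cmat_smult t E)
    = p A B + cmat_smult t (p A E) + cmat_smult s (p E B) + cmat_smult (s*t) (p E E)"
proof -
  have a1: "\<And>A B C. p (A + B) C = p A C + p B C" and a2: "\<And>A B C. p A (B + C) = p A B + p A C"
    and s1: "\<And>c A B. p (cmat_smult c A) B = cmat_smult c (p A B)"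
    and s2: "\<And>c A B. p A (cmat_smult c B) = cmat_smult c (p A B)"
    using assms unfolding ropp_def by blast+
  show ?thesis by (simp only: a1 a2 s1 s2) (simp add: cmat_smult_def vec_eq_iff algebra_simps)
qed

lemma p_zero:
  assumes "ropp p"
  shows "p 0 Y = 0" "p Y 0 = 0"
proof -
  have a1: "\<And>A B C. p (A + B) C = p A C + p B C" and a2: "\<And>A B C. p A (B + C) = p A B + p A C"
    using assms unfolding ropp_def by blast+
  have "p 0 Y = p 0 Y + p 0 Y" using a1[of 0 0 Y] by simp
  then show "p 0 Y = 0" by simp
  have "p Y 0 = p Y 0 + p Y 0" using a2[of Y 0 0] by simp
  then show "p Y 0 = 0" by simp
qed

lemma outer_zero1: "outer 0 f = 0" and outer_zero2: "outer e 0 = 0"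
  by (simp_all add: outer_def vec_eq_iff)

lemma prod_rank:
  assumes "ropp p" and "rank (outer a b) = 1 \<or> outer a b = 0" and "rank (outer c d) = 1 \<or> outer c d = 0"
  shows "rank (p (outer a b) (outer c d)) \<le> 1"
proof -
  have rk: "\<And>A B. rank A = 1 \<longrightarrow> rank B = 1 \<longrightarrow> rank (p A B) \<le> 1"
    using assms(1) unfolding ropp_def by blast
  show ?thesis using assms(2,3) rk p_zero[OF assms(1)] rank_zero by (metis le0)
qed

lemma outer_cases: "rank (outer (x::complex^'n) (y::complex^'m)) = 1 \<or> outer x y = 0"
  using rank_outer[of x y] outer_zero1[of y] outer_zero2[of x] by blast

theorem mainTheorem2:
  fixes p :: "complex^'m^'n \<Rightarrow> complex^'m^'n \<Rightarrow> complex^'m^'n"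
    and e :: "complex^'n" and f :: "complex^'m"
  assumes "ropp p"
    and "is_identity p (outer e f)"
  shows "(\<forall>v w :: complex^'n. \<exists>u. p (outer v f) (outer w f) = outer u f)
       \<and> (\<forall>v w :: complex^'m. \<exists>u. p (outer e v) (outer e w) = outer e u)"
proof -
  let ?E = "outer e f"
  have s1: "\<And>c A B. p (cmat_smult c A) B = cmat_smult c (p A B)"
    and s2: "\<And>c A B. p A (cmat_smult c B) = cmat_smult c (p A B)"
    using assms(1) unfolding ropp_def by blast+
  obtain E' where E': "is_identity p E'" "rank E' = 1" using assms(1) unfolding ropp_def by blast
  have "E' = ?E" using E'(1) assms(2) unfolding is_identity_def by metis
  then have rE: "rank ?E = 1" using E'(2) by simp
  have id1: "p ?E X = X" and id2: "p X ?E = X" for X using assms(2) unfolding is_identity_def by auto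
  have "e \<noteq> 0"
  proof
    assume "e = 0" then have "?E = 0" by (simp add: outer_zero1)
    then show False using rE by (simp add: rank_zero)
  qed
  then obtain m where em: "e$m \<noteq> 0" by (metis vec_eq_iff zero_index)
  have "f \<noteq> 0"
  proof
    assume "f = 0" then have "?E = 0" by (simp add: outer_zero2)
    then show False using rE by (simp add: rank_zero)
  qed
  then obtain k where fk: "f$k \<noteq> 0" by (metis vec_eq_iff zero_index)
  have EE: "p (cmat_smult b ?E) (cmat_smult c ?E) = cmat_smult (b*c) ?E" for b c
    by (simp add: s1 s2 id1 cmat_smult_smult mult.commute)
  have P1: "\<exists>u. p (outer v f) (outer w f) = outer u f" for v w
  proof -
    let ?C = "p (outer v f) (outer w f)"
    have M: "?C$i$j + cnj (f$j) * (t * v$i + s * w$i + s*t*e$i)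
        = p (outer (v + s *s e) f) (outer (w + t *s e) f) $i$j" for s t i j
    proof -
      have h: "outer (v + s *s e) f = outer v f + cmat_smult s ?E"
        "outer (w + t *s e) f = outer w f + cmat_smult t ?E"
        by (simp_all add: outer_def cmat_smult_def vec_eq_iff algebra_simps)
      show ?thesis unfolding h expand[OF assms(1)] id1 id2
        by (simp add: outer_def cmat_smult_def algebra_simps)
    qed
    have "\<exists>u. \<forall>i j. ?C$i$j = u i * cnj (f$j)"
    proof (rule core[where k=k and m=m and e="\<lambda>i. e$i" and vv="\<lambda>i. v$i" and w="\<lambda>i. w$i"])
      show "cnj (f$k) \<noteq> 0" using fk by simp
      show "e$m \<noteq> 0" by fact
    next
      fix s t i l j
      show "(?C$i$j + cnj (f$j) * (t * v$i + s * w$i + s*t*e$i)) * (?C$l$k + cnj (f$k) * (t * v$l + s * w$l + s*t*e$l))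
         = (?C$i$k + cnj (f$k) * (t * v$i + s * w$i + s*t*e$i)) * (?C$l$j + cnj (f$j) * (t * v$l + s * w$l + s*t*e$l))"
        unfolding M by (rule rank_le1_minor[OF prod_rank[OF assms(1) outer_cases outer_cases]])
    next
      fix \<beta> \<gamma> i j
      assume "\<forall>i. v$i = \<beta> * e$i" "\<forall>i. w$i = \<gamma> * e$i"
      then have "outer v f = cmat_smult \<beta> ?E" "outer w f = cmat_smult \<gamma> ?E"
        by (simp_all add: outer_def cmat_smult_def vec_eq_iff)
      then show "?C$i$j = \<beta> * \<gamma> * e$i * cnj (f$j)"
        using EE by (simp add: outer_def cmat_smult_def)
    qed
    then obtain u where u: "\<forall>i j. ?C$i$j = u i * cnj (f$j)" by blast
    show ?thesis by (rule exI[of _ "\<chi> i. u i"]) (simp add: u outer_def[of "\<chi> i. u i" f] vec_eq_iff)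
  qed
  have P2: "\<exists>u. p (outer e v) (outer e w) = outer e u" for v w
  proof -
    let ?C = "p (outer e v) (outer e w)"
    have M: "?C$i$j + e$i * (t * cnj (v$j) + s * cnj (w$j) + s*t*cnj (f$j))
        = p (outer e (v + cnj s *s f)) (outer e (w + cnj t *s f)) $i$j" for s t i j
    proof -
      have h: "outer e (v + cnj s *s f) = outer e v + cmat_smult s ?E"
        "outer e (w + cnj t *s f) = outer e w + cmat_smult t ?E"
        by (simp_all add: outer_def cmat_smult_def vec_eq_iff algebra_simps)
      show ?thesis unfolding h expand[OF assms(1)] id1 id2
        by (simp add: outer_def cmat_smult_def algebra_simps)
    qed
    have "\<exists>u. \<forall>j i. ?C$i$j = u j * e$i"
    proof (rule core[where k=m and m=k and e="\<lambda>j. cnj (f$j)" and vv="\<lambda>j. cnj (v$j)" and w="\<lambda>j. cnj (w$j)"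
          and C="\<lambda>j i. ?C$i$j" and g="\<lambda>i. e$i"])
      show "e$m \<noteq> 0" by fact
      show "cnj (f$k) \<noteq> 0" using fk by simp
    next
      fix s t j l i
      have "(?C$i$j + e$i * (t * cnj (v$j) + s * cnj (w$j) + s*t*cnj (f$j))) * (?C$m$l + e$m * (t * cnj (v$l) + s * cnj (w$l) + s*t*cnj (f$l)))
         = (?C$i$l + e$i * (t * cnj (v$l) + s * cnj (w$l) + s*t*cnj (f$l))) * (?C$m$j + e$m * (t * cnj (v$j) + s * cnj (w$j) + s*t*cnj (f$j)))"
        unfolding M by (rule rank_le1_minor[OF prod_rank[OF assms(1) outer_cases outer_cases]])
      then show "(?C$i$j + e$i * (t * cnj (v$j) + s * cnj (w$j) + s*t*cnj (f$j))) * (?C$m$l + e$m * (t * cnj (v$l) + s * cnj (w$l) + s*t*cnj (f$l)))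
         = (?C$m$j + e$m * (t * cnj (v$j) + s * cnj (w$j) + s*t*cnj (f$j))) * (?C$i$l + e$i * (t * cnj (v$l) + s * cnj (w$l) + s*t*cnj (f$l)))"
        by (simp add: mult.commute)
    next
      fix \<beta> \<gamma> j i
      assume "\<forall>j. cnj (v$j) = \<beta> * cnj (f$j)" "\<forall>j. cnj (w$j) = \<gamma> * cnj (f$j)"
      then have "outer e v = cmat_smult \<beta> ?E" "outer e w = cmat_smult \<gamma> ?E"
        by (simp_all add: outer_def cmat_smult_def vec_eq_iff mult.left_commute)
      then show "?C$i$j = \<beta> * \<gamma> * cnj (f$j) * e$i"
        using EE by (simp add: outer_def cmat_smult_def algebra_simps)
    qed
    then obtain u where u: "\<forall>j i. ?C$i$j = u j * e$i" by blast
    show ?thesis by (rule exI[of _ "\<chi> j. cnj (u j)"]) (simp add: u outer_def[of e "\<chi> j. cnj (u j)"] vec_eq_iff mult.commute)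
  qed
  show ?thesis using P1 P2 by blast
qed

end
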